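(* Let $n\ge2$ and $\rho\in\mathbb{C}\setminus\{-1,0,1\}$. For every $z\in\mathbb{C}$ with $z\neq\rho$ and $z\neq1/\rho$, put $$\lambda(\rho,z)=\frac{z(1-\rho^2)}{(z-\rho)(1-z\rho)}.$$ Then $$p_{2n}(\rho,z)=\frac{(z-\rho)^n(1-z\rho)^n}{\rho^n(1-\rho^2)^{n-1}}\,\psi_n\bigl(\rho,\lambda(\rho,z)\bigr).$$ Moreover, for $z\neq0$, $\lambda(\rho,z)=\sigma(\rho,-i\ln z)$, i.e. $\lambda(\rho,z)=\frac{1-\rho^2}{1-\rho(z+z^{-1})+\rho^2}$.
   Context: $K_n(\rho)=\left[\rho^{|j-k|}\right]_{j,k=1}^n$ and $\psi_n(\rho,\lambda)=\det[\lambda I_n-K_n(\rho)]$ is its characteristic polynomial. $p_{2n}(\rho,z)=z^{2n}+(1+\rho^2)\sum_{k=1}^{n-1}z^{2k}-2\rho\sum_{k=0}^{n-1}z^{2k+1}+1$ (equal to $\frac{z^{2n}(z-\rho)^2-(\rho z-1)^2}{z^2-1}$ for $z\ne\pm1$). $\sigma(\rho,\theta)=\frac{1-\rho^2}{1-2\rho\cos\theta+\rho^2}$, extended to complex $\theta$ (so that with $\theta=-i\ln z$ one has $2\cos\theta=z+z^{-1}$). *)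

theory Defs
  imports "Jordan_Normal_Form.Char_Poly" "HOL-Analysis.Analysis"
begin

definition KMS :: "nat \<Rightarrow> complex \<Rightarrow> complex mat" where
  "KMS n \<rho> = Matrix.mat n n (\<lambda>(j, k). \<rho> ^ (if j \<le> k then k - j else j - k))"

definition psi :: "nat \<Rightarrow> complex \<Rightarrow> complex \<Rightarrow> complex" where
  "psi n \<rho> x = poly (char_poly (KMS n \<rho>)) x"

definition p2n :: "nat \<Rightarrow> complex \<Rightarrow> complex \<Rightarrow> complex" where
  "p2n n \<rho> z = z ^ (2 * n) + (1 + \<rho>\<^sup>2) * (\<Sum>k = 1..n - 1. z ^ (2 * k))
      - 2 * \<rho> * (\<Sum>k = 0..n - 1. z ^ (2 * k + 1)) + 1"

definition sigma :: "complex \<Rightarrow> complex \<Rightarrow> complex" where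
  "sigma \<rho> \<theta> = (1 - \<rho>\<^sup>2) / (1 - 2 * \<rho> * cos \<theta> + \<rho>\<^sup>2)"

definition lam :: "complex \<Rightarrow> complex \<Rightarrow> complex" where
  "lam \<rho> z = z * (1 - \<rho>\<^sup>2) / ((z - \<rho>) * (1 - z * \<rho>))"

end

theory Submission
  imports Defs
begin

lemma det_rowop:
  fixes A :: "'a :: comm_ring_1 mat"
  assumes A: "A \<in> carrier_mat n n"
  shows "Determinant.det (Matrix.mat n n (\<lambda>(i,j). if Suc i < n then A$$(i,j) + a * A$$(Suc i, j) else A$$(i,j))) = Determinant.det A"
proof -
  define R where "R m = Matrix.mat n n (\<lambda>(i,j). if i < m \<and> Suc i < n then A$$(i,j) + a * A$$(Suc i, j) else A$$(i,j))" for m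
  have "Determinant.det (R m) = Determinant.det A" for m
  proof (induction m)
    case 0
    have "R 0 = A" by (rule eq_matI, insert A, auto simp: R_def)
    then show ?case by simp
  next
    case (Suc m)
    show ?case
    proof (cases "Suc m < n")
      case True
      have "R (Suc m) = addrow a m (Suc m) (R m)"
        by (rule eq_matI, insert A True, auto simp: R_def mat_addrow_def)
      moreover have "Determinant.det (addrow a m (Suc m) (R m)) = Determinant.det (R m)"
        by (rule det_addrow[OF True], auto simp: R_def)
      ultimately show ?thesis using Suc by simp
    next
      case False
      have "R (Suc m) = R m"
        by (rule eq_matI, insert False, auto simp: R_def)
      then show ?thesis using Suc by simp
    qed
  qed
  moreover have "R n = Matrix.mat n n (\<lambda>(i,j). if Suc i < n then A$$(i,j) + a * A$$(Suc i, j) else A$$(i,j))"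
    by (rule eq_matI, auto simp: R_def)
  ultimately show ?thesis by metis
qed

lemma det_colop:
  fixes A :: "'a :: comm_ring_1 mat"
  assumes A: "A \<in> carrier_mat n n"
  shows "Determinant.det (Matrix.mat n n (\<lambda>(i,j). if Suc j < n then A$$(i,j) + a * A$$(i, Suc j) else A$$(i,j))) = Determinant.det A"
proof -
  have AT: "A\<^sup>T \<in> carrier_mat n n" using A by simp
  have "Matrix.mat n n (\<lambda>(i,j). if Suc j < n then A$$(i,j) + a * A$$(i, Suc j) else A$$(i,j))
      = (Matrix.mat n n (\<lambda>(i,j). if Suc i < n then A\<^sup>T$$(i,j) + a * A\<^sup>T$$(Suc i, j) else A\<^sup>T$$(i,j)))\<^sup>T"
    by (rule eq_matI, insert A, auto)
  also have "Determinant.det \<dots> = Determinant.det (Matrix.mat n n (\<lambda>(i,j). if Suc i < n then A\<^sup>T$$(i,j) + a * A\<^sup>T$$(Suc i, j) else A\<^sup>T$$(i,j)))"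
    by (subst Determinant.det_transpose[of _ n], auto)
  also have "\<dots> = Determinant.det A\<^sup>T" by (rule det_rowop[OF AT])
  also have "\<dots> = Determinant.det A" by (rule Determinant.det_transpose[OF A])
  finally show ?thesis .
qed

definition trid :: "nat \<Rightarrow> 'a::comm_ring_1 \<Rightarrow> 'a \<Rightarrow> 'a \<Rightarrow> 'a mat" where
  "trid m a b d = Matrix.mat m m (\<lambda>(i,j). if i = j then (if i = m - 1 then d else a)
      else if j = Suc i \<or> i = Suc j then b else 0)"

lemma trid_carrier[simp]: "trid m a b d \<in> carrier_mat m m"
  by (simp add: trid_def)

lemma det_trid1: "Determinant.det (trid 1 a b d) = d"
  by (subst det_single, auto simp: trid_def)

lemma trid_index: "i < m \<Longrightarrow> j < m \<Longrightarrow> trid m a b d $$ (i,j) =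
   (if i = j then (if i = m - 1 then d else a) else if j = Suc i \<or> i = Suc j then b else 0)"
  by (simp add: trid_def)

lemma det_trid_rec:
  "Determinant.det (trid (Suc (Suc m)) a b d) = a * Determinant.det (trid (Suc m) a b d) - b^2 * Determinant.det (trid m a b d)"
proof -
  let ?T = "trid (Suc (Suc m)) a b d"
  have c00: "cofactor ?T 0 0 = Determinant.det (trid (Suc m) a b d)"
  proof -
    have "mat_delete ?T 0 0 = trid (Suc m) a b d"
      by (rule eq_matI, auto simp: trid_def mat_delete_def)
    then show ?thesis by (simp add: cofactor_def)
  qed
  have c01: "cofactor ?T 0 1 = - (b * Determinant.det (trid m a b d))"
  proof -
    let ?M = "mat_delete ?T 0 1"
    have M: "?M \<in> carrier_mat (Suc m) (Suc m)" by (simp add: mat_delete_def trid_def)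
    have "Determinant.det ?M = (\<Sum>i<Suc m. ?M $$ (i,0) * cofactor ?M i 0)"
      by (rule laplace_expansion_column[OF M], auto)
    also have "\<dots> = ?M $$ (0,0) * cofactor ?M 0 0 + (\<Sum>i<m. ?M $$ (Suc i,0) * cofactor ?M (Suc i) 0)"
      by (simp only: sum.lessThan_Suc_shift)
    also have "(\<Sum>i<m. ?M $$ (Suc i,0) * cofactor ?M (Suc i) 0) = 0"
      by (rule sum.neutral, auto simp: trid_def mat_delete_def)
    also have "?M $$ (0,0) = b" by (simp add: trid_def mat_delete_def)
    also have "cofactor ?M 0 0 = Determinant.det (trid m a b d)"
    proof -
      have "mat_delete ?M 0 0 = trid m a b d"
        by (rule eq_matI, auto simp: trid_def mat_delete_def)
      then show ?thesis by (simp add: cofactor_def)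
    qed
    finally have "Determinant.det ?M = b * Determinant.det (trid m a b d)" by (simp add: cofactor_def)
    then show ?thesis by (simp add: cofactor_def)
  qed
  have "Determinant.det ?T = (\<Sum>j<Suc (Suc m). ?T $$ (0,j) * cofactor ?T 0 j)"
    by (rule laplace_expansion_row, auto)
  also have "\<dots> = ?T $$ (0,0) * cofactor ?T 0 0 + ?T $$ (0,1) * cofactor ?T 0 1
      + (\<Sum>j<m. ?T $$ (0,Suc (Suc j)) * cofactor ?T 0 (Suc (Suc j)))"
    by (simp only: sum.lessThan_Suc_shift, simp add: algebra_simps)
  also have "(\<Sum>j<m. ?T $$ (0,Suc (Suc j)) * cofactor ?T 0 (Suc (Suc j))) = 0"
    by (rule sum.neutral, auto simp: trid_index)
  also have "?T $$ (0,0) = a" by (simp add: trid_def)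
  also have "?T $$ (0,1) = b" by (simp add: trid_def)
  finally show ?thesis unfolding c00 c01 by (simp add: power2_eq_square algebra_simps)
qed

definition G :: "complex \<Rightarrow> nat \<Rightarrow> complex" where
  "G z m = (\<Sum>k<m. z ^ (2*k))"

definition Q :: "complex \<Rightarrow> complex \<Rightarrow> nat \<Rightarrow> complex" where
  "Q \<rho> z m = G z (m+1) - 2*\<rho>*z * G z m + \<rho>^2*z^2 * G z (m-1)"

lemma G_rec: "G z (Suc (Suc m)) = (1 + z^2) * G z (Suc m) - z^2 * G z m"
  by (simp add: G_def algebra_simps power_mult power2_eq_square power_add)

lemma Q_rec: "Q \<rho> z (Suc (Suc (Suc k))) = (1 + z^2) * Q \<rho> z (Suc (Suc k)) - z^2 * Q \<rho> z (Suc k)"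
  by (simp add: Q_def G_rec algebra_simps)

lemma trid_closed:
  assumes "a = c*(1+z^2)" "b^2 = c^2*z^2" "(1-\<rho>^2)*d = c * Q \<rho> z 1"
  shows "(1-\<rho>^2) * Determinant.det (trid (Suc m) a b d) = c^(Suc m) * Q \<rho> z (Suc m)
       \<and> (1-\<rho>^2) * Determinant.det (trid (Suc (Suc m)) a b d) = c^(Suc (Suc m)) * Q \<rho> z (Suc (Suc m))"
proof (induction m)
  case 0
  have q1: "Q \<rho> z 1 = 1 + z^2 - 2*\<rho>*z" by (simp add: Q_def G_def numeral_2_eq_2)
  have q2: "Q \<rho> z 2 = 1 + z^2 + z^4 - 2*\<rho>*z*(1+z^2) + \<rho>^2*z^2"
    by (simp add: Q_def G_def numeral_3_eq_3 numeral_2_eq_2 algebra_simps power2_eq_square power4_eq_xxxx)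
  have d0: "Determinant.det (trid 0 a b d) = 1" by (rule det_dim_zero, simp)
  have D2: "Determinant.det (trid (Suc (Suc 0)) a b d) = a*d - b^2"
    using det_trid_rec[of 0 a b d] det_trid1[of a b d] d0 by simp
  have "(1-\<rho>^2)*(a*d - b^2) = a*((1-\<rho>^2)*d) - (1-\<rho>^2)*b^2" by (simp add: algebra_simps)
  also have "\<dots> = c*(1+z^2)*(c*Q \<rho> z 1) - (1-\<rho>^2)*(c^2*z^2)" using assms by simp
  also have "\<dots> = c^2 * Q \<rho> z 2" unfolding q1 q2 by (simp add: algebra_simps power2_eq_square power4_eq_xxxx)
  finally show ?case using det_trid1[of a b d] assms(3) D2 by (simp add: numeral_2_eq_2)
next
  case (Suc m)
  let ?D = "\<lambda>k. Determinant.det (trid k a b d)"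
  have IH1: "(1-\<rho>^2) * ?D (Suc m) = c^(Suc m) * Q \<rho> z (Suc m)"
   and IH2: "(1-\<rho>^2) * ?D (Suc (Suc m)) = c^(Suc (Suc m)) * Q \<rho> z (Suc (Suc m))" using Suc by auto
  have "(1-\<rho>^2) * ?D (Suc (Suc (Suc m))) = a * ((1-\<rho>^2) * ?D (Suc (Suc m))) - b^2 * ((1-\<rho>^2) * ?D (Suc m))"
    unfolding det_trid_rec[of "Suc m" a b d] by (simp add: algebra_simps)
  also have "\<dots> = c*(1+z^2) * (c^(Suc (Suc m)) * Q \<rho> z (Suc (Suc m))) - c^2*z^2 * (c^(Suc m) * Q \<rho> z (Suc m))"
    by (simp only: IH1 IH2 assms(2), simp add: assms(1))
  also have "\<dots> = c^(Suc (Suc (Suc m))) * ((1 + z^2) * Q \<rho> z (Suc (Suc m)) - z^2 * Q \<rho> z (Suc m))"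
    by (simp add: algebra_simps power2_eq_square)
  also have "\<dots> = c^(Suc (Suc (Suc m))) * Q \<rho> z (Suc (Suc (Suc m)))" using Q_rec[of \<rho> z m] by simp
  finally show ?case using IH2 by simp
qed

lemma p2n_Q:
  assumes "n \<ge> 1"
  shows "p2n n \<rho> z = Q \<rho> z n"
proof -
  obtain m where n: "n = Suc m" using assms by (cases n, auto)
  have s1: "(\<Sum>k = 1..m. z ^ (2 * k)) = z^2 * G z m"
    by (induction m, simp_all add: G_def algebra_simps power_mult)
  have s2: "(\<Sum>k = 0..m. z ^ (2 * k + 1)) = z * G z (Suc m)"
    by (induction m, simp_all add: G_def algebra_simps power_mult)
  have s3: "z^(2*Suc m) + 1 + z^2 * G z m = G z (Suc (Suc m))"
    by (induction m, simp_all add: G_def algebra_simps power_mult power2_eq_square)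
  show ?thesis unfolding p2n_def Q_def n using s1 s2 s3
    by (simp add: algebra_simps power2_eq_square)
qed

lemma psi_det:
  "psi n \<rho> x = Determinant.det (Matrix.mat n n (\<lambda>(i,j). (if i = j then x else 0) - KMS n \<rho> $$ (i,j)))"
proof -
  have K: "KMS n \<rho> \<in> carrier_mat n n" by (simp add: KMS_def)
  have "psi n \<rho> x = Determinant.det (- (char_matrix (KMS n \<rho>) x))"
    unfolding psi_def by (rule char_poly_matrix[OF K])
  also have "- (char_matrix (KMS n \<rho>) x) = Matrix.mat n n (\<lambda>(i,j). (if i = j then x else 0) - KMS n \<rho> $$ (i,j))"
    by (rule eq_matI, auto simp: char_matrix_def KMS_def)
  finally show ?thesis .
qed

lemma entry:
  fixes x \<rho> :: complex and f :: "nat \<Rightarrow> nat \<Rightarrow> complex"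
  assumes f_def: "\<And>i j. f i j = (if i = j then x else 0) - \<rho> ^ (if i \<le> j then j - i else i - j)"
  assumes i: "i < n" and j: "j < n"
  shows "(if Suc j < n then (if Suc i < n then f i j + (-\<rho>) * f (Suc i) j else f i j)
            + (-\<rho>) * (if Suc i < n then f i (Suc j) + (-\<rho>) * f (Suc i) (Suc j) else f i (Suc j))
          else (if Suc i < n then f i j + (-\<rho>) * f (Suc i) j else f i j))
       = (if i = j then (if i = n - 1 then x - 1 else x*(1+\<rho>^2) - (1-\<rho>^2))
          else if j = Suc i \<or> i = Suc j then -x*\<rho> else 0)"
proof -
  consider "i = j" | "j = Suc i" | "i = Suc j" | k where "j = i + Suc (Suc k)" | k where "i = j + Suc (Suc k)"
  proof -
    assume h1: "i = j \<Longrightarrow> thesis" and h2: "j = Suc i \<Longrightarrow> thesis" and h3: "i = Suc j \<Longrightarrow> thesis"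
      and h4: "\<And>k. j = i + Suc (Suc k) \<Longrightarrow> thesis" and h5: "\<And>k. i = j + Suc (Suc k) \<Longrightarrow> thesis"
    have "i = j \<or> j = Suc i \<or> i = Suc j \<or> Suc i < j \<or> Suc j < i" by arith
    moreover have "Suc i < j \<Longrightarrow> j = i + Suc (Suc (j - i - 2))" by arith
    moreover have "Suc j < i \<Longrightarrow> i = j + Suc (Suc (i - j - 2))" by arith
    ultimately show thesis using h1 h2 h3 h4 h5 by blast
  qed
  then show ?thesis
  proof cases
    case 1
    have v: "f i i = x - 1" "f (Suc i) i = -\<rho>" "f i (Suc i) = -\<rho>" "f (Suc i) (Suc i) = x - 1"
      by (simp_all add: f_def)
    show ?thesis using i j 1 v by (cases "Suc i < n", auto simp: algebra_simps power2_eq_square)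
  next
    case 2
    have v: "f i (Suc i) = -\<rho>" "f (Suc i) (Suc i) = x - 1" "f i (Suc (Suc i)) = -(\<rho>*\<rho>)" "f (Suc i) (Suc (Suc i)) = -\<rho>"
      by (simp_all add: f_def power2_eq_square)
    show ?thesis using i j 2 v by (cases "Suc j < n", auto simp: algebra_simps power2_eq_square)
  next
    case 3
    have v: "f (Suc j) j = -\<rho>" "f (Suc (Suc j)) j = -(\<rho>*\<rho>)" "f (Suc j) (Suc j) = x - 1" "f (Suc (Suc j)) (Suc j) = -\<rho>"
      by (simp_all add: f_def power2_eq_square)
    show ?thesis using i j 3 v by (cases "Suc i < n", auto simp: algebra_simps power2_eq_square)
  next
    case (4 k)
    have v: "f i j = -(\<rho>*\<rho>*\<rho>^k)" "f (Suc i) j = -(\<rho>*\<rho>^k)" "f i (Suc j) = -(\<rho>*\<rho>*\<rho>*\<rho>^k)"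
        "f (Suc i) (Suc j) = -(\<rho>*\<rho>*\<rho>^k)"
      using 4 by (simp_all add: f_def eval_nat_numeral power_add)
    have ne: "i \<noteq> j" "j \<noteq> Suc i" "i \<noteq> Suc j" "Suc i < n" using 4 j by auto
    show ?thesis using ne v by (cases "Suc j < n", auto simp: algebra_simps)
  next
    case (5 k)
    have v: "f i j = -(\<rho>*\<rho>*\<rho>^k)" "f (Suc i) j = -(\<rho>*\<rho>*\<rho>*\<rho>^k)" "f i (Suc j) = -(\<rho>*\<rho>^k)"
        "f (Suc i) (Suc j) = -(\<rho>*\<rho>*\<rho>^k)"
      using 5 by (simp_all add: f_def eval_nat_numeral power_add)
    have ne: "i \<noteq> j" "j \<noteq> Suc i" "i \<noteq> Suc j" "Suc j < n" using 5 i by auto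
    show ?thesis using ne v by (cases "Suc i < n", auto simp: algebra_simps)
  qed
qed

lemma psi_trid:
  fixes x \<rho> :: complex
  shows "psi n \<rho> x = Determinant.det (trid n (x*(1+\<rho>^2) - (1-\<rho>^2)) (-x*\<rho>) (x - 1))"
proof -
  define A where "A = Matrix.mat n n (\<lambda>(i,j). (if i = j then x else 0) - KMS n \<rho> $$ (i,j))"
  define B where "B = Matrix.mat n n (\<lambda>(i,j). if Suc i < n then A$$(i,j) + (-\<rho>) * A$$(Suc i, j) else A$$(i,j))"
  define C where "C = Matrix.mat n n (\<lambda>(i,j). if Suc j < n then B$$(i,j) + (-\<rho>) * B$$(i, Suc j) else B$$(i,j))"
  have A: "A \<in> carrier_mat n n" by (simp add: A_def)
  have B: "B \<in> carrier_mat n n" by (simp add: B_def)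
  have "psi n \<rho> x = Determinant.det A" unfolding A_def by (rule psi_det)
  also have "\<dots> = Determinant.det B" unfolding B_def by (rule det_rowop[OF A, symmetric])
  also have "\<dots> = Determinant.det C" unfolding C_def by (rule det_colop[OF B, symmetric])
  also have "C = trid n (x*(1+\<rho>^2) - (1-\<rho>^2)) (-x*\<rho>) (x - 1)"
  proof (rule eq_matI)
    fix i j assume i: "i < dim_row (trid n (x*(1+\<rho>^2) - (1-\<rho>^2)) (-x*\<rho>) (x - 1))"
      and j: "j < dim_col (trid n (x*(1+\<rho>^2) - (1-\<rho>^2)) (-x*\<rho>) (x - 1))"
    then have i: "i < n" and j: "j < n" by (auto simp: trid_def)
    show "C $$ (i, j) = trid n (x*(1+\<rho>^2) - (1-\<rho>^2)) (-x*\<rho>) (x - 1) $$ (i, j)"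
    proof -
      define f where "f = (\<lambda>i j. (if i = j then x else 0) - \<rho> ^ (if i \<le> j then j - i else i - j))"
      have Aij: "A$$(i,j) = f i j" if "i < n" "j < n" for i j
        using that by (simp add: A_def KMS_def f_def)
      have Bij: "B$$(i,j) = (if Suc i < n then f i j + (-\<rho>) * f (Suc i) j else f i j)" if "i < n" "j < n" for i j
        using that by (auto simp: B_def Aij)
      have "C$$(i,j) = (if Suc j < n then (if Suc i < n then f i j + (-\<rho>) * f (Suc i) j else f i j)
            + (-\<rho>) * (if Suc i < n then f i (Suc j) + (-\<rho>) * f (Suc i) (Suc j) else f i (Suc j))
          else (if Suc i < n then f i j + (-\<rho>) * f (Suc i) j else f i j))"
        using i j by (auto simp: C_def Bij)
      also have "\<dots> = trid n (x*(1+\<rho>^2) - (1-\<rho>^2)) (-x*\<rho>) (x - 1) $$ (i, j)"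
        unfolding trid_index[OF i j] by (rule entry[OF _ i j], simp add: f_def)
      finally show ?thesis .
    qed
  qed (auto simp: C_def trid_def)
  finally show ?thesis .
qed

theorem lemma3p2:
  fixes n :: nat and \<rho> z :: complex
  assumes "n \<ge> 2"
    and "\<rho> \<notin> {-1, 0, 1}"
    and "z \<noteq> \<rho>" and "z \<noteq> 1 / \<rho>"
  shows "p2n n \<rho> z
           = (z - \<rho>) ^ n * (1 - z * \<rho>) ^ n / (\<rho> ^ n * (1 - \<rho>\<^sup>2) ^ (n - 1))
             * psi n \<rho> (lam \<rho> z)
         \<and> (z \<noteq> 0 \<longrightarrow> lam \<rho> z = sigma \<rho> (- \<i> * Ln z)
                    \<and> lam \<rho> z = (1 - \<rho>\<^sup>2) / (1 - \<rho> * (z + inverse z) + \<rho>\<^sup>2))"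
proof -
  have r0: "\<rho> \<noteq> 0" and r1: "1 - \<rho>^2 \<noteq> 0" using assms(2)
    by (auto simp: power2_eq_square) (metis square_eq_1_iff power2_eq_square)
  have w1: "z - \<rho> \<noteq> 0" using assms(3) by simp
  have w2: "1 - z * \<rho> \<noteq> 0" using assms(4) r0 by (auto simp: field_simps)
  define w where "w = (z - \<rho>) * (1 - z * \<rho>)"
  have w: "w \<noteq> 0" using w1 w2 by (simp add: w_def)
  define c where "c = \<rho> * (1 - \<rho>^2) / w"
  define x where "x = lam \<rho> z"
  have x: "x = z * (1 - \<rho>^2) / w" by (simp add: x_def lam_def w_def)
  have q1: "Q \<rho> z 1 = 1 + z^2 - 2*\<rho>*z" by (simp add: Q_def G_def numeral_2_eq_2)
  have ha: "x*(1+\<rho>^2) - (1-\<rho>^2) = c*(1+z^2)"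
    unfolding x c_def using w by (simp add: field_simps w_def) (simp add: algebra_simps eval_nat_numeral)
  have hb: "(-x*\<rho>)^2 = c^2*z^2"
    unfolding x c_def using w by (simp add: field_simps power2_eq_square)
  have hd: "(1-\<rho>^2)*(x - 1) = c * Q \<rho> z 1"
    unfolding x c_def q1 using w by (simp add: field_simps w_def) (simp add: algebra_simps eval_nat_numeral)
  obtain m where n: "n = Suc m" using assms(1) by (cases n, auto)
  have D: "(1-\<rho>^2) * psi n \<rho> x = c^n * Q \<rho> z n"
    unfolding psi_trid n using trid_closed[OF ha hb hd, of m] by simp
  have P: "p2n n \<rho> z = Q \<rho> z n" by (rule p2n_Q, simp add: n)
  have part1: "p2n n \<rho> z = (z - \<rho>) ^ n * (1 - z * \<rho>) ^ n / (\<rho> ^ n * (1 - \<rho>\<^sup>2) ^ (n - 1)) * psi n \<rho> x"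
  proof -
    have ps: "psi n \<rho> x = c^n * Q \<rho> z n / (1-\<rho>^2)" using D r1 by (simp add: field_simps)
    have W: "(z - \<rho>) ^ n * (1 - z * \<rho>) ^ n = w^n" by (simp add: w_def power_mult_distrib)
    have E: "(1 - \<rho>\<^sup>2) ^ n = (1 - \<rho>\<^sup>2) ^ (n - 1) * (1 - \<rho>^2)" by (simp add: n)
    have cn: "c^n = \<rho>^n * ((1 - \<rho>\<^sup>2) ^ (n - 1) * (1 - \<rho>^2)) / w^n"
      unfolding c_def E[symmetric] by (simp add: power_divide power_mult_distrib)
    have gen: "W / (R * EE) * ((R * (EE * e) / W) * q / e) = q"
      if "W \<noteq> 0" "R \<noteq> 0" "EE \<noteq> 0" "e \<noteq> 0" for W R EE e q :: complex
      using that by (simp add: field_simps)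
    show ?thesis unfolding ps P W cn
      by (rule gen[symmetric], insert w r0 r1, auto)
  qed
  have part2: "lam \<rho> z = sigma \<rho> (- \<i> * Ln z) \<and> lam \<rho> z = (1 - \<rho>\<^sup>2) / (1 - \<rho> * (z + inverse z) + \<rho>\<^sup>2)"
    if z0: "z \<noteq> 0"
  proof -
    have cz: "cos (- \<i> * Ln z) = (z + inverse z) / 2"
      unfolding cos_exp_eq using z0 by (simp add: exp_minus)
    have e2: "lam \<rho> z = (1 - \<rho>\<^sup>2) / (1 - \<rho> * (z + inverse z) + \<rho>\<^sup>2)"
    proof -
      have "1 - \<rho> * (z + inverse z) + \<rho>\<^sup>2 = w / z" using z0 by (simp add: w_def field_simps power2_eq_square)
      then show ?thesis using z0 w by (simp add: lam_def w_def field_simps)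
    qed
    moreover have "sigma \<rho> (- \<i> * Ln z) = (1 - \<rho>\<^sup>2) / (1 - \<rho> * (z + inverse z) + \<rho>\<^sup>2)"
      unfolding sigma_def cz by simp
    ultimately show ?thesis by simp
  qed
  show ?thesis using part1 part2 unfolding x_def by blast
qed

end
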